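(* For every flag complex $\Delta$ there exists a vertex-decomposable flag complex $\Gamma$ whose $h$-vector, with trailing zeros removed, equals the face vector of $\Delta$.
   Context: A flag complex is a simplicial complex all of whose minimal non-faces have two elements, equivalently the independence complex of a graph. Face vector: $(f_{-1},\ldots,f_{d-1})$, $f_i$ = number of faces with $i+1$ elements, for a $(d-1)$-dimensional complex; $h$-vector: $(h_0,\ldots,h_d)$ with $h_j=\sum_{i=0}^{j}(-1)^{j-i}\binom{d-i}{j-i}f_{i-1}$. A pure complex $\Delta$ is vertex-decomposable if it is a simplex or has a vertex $v$ with $\mathrm{link}_\Delta v=\{\tau\in\Delta: v\notin\tau,\ \tau\cup\{v\}\in\Delta\}$ and $\mathrm{del}_\Delta v=\{\tau\in\Delta: v\notin\tau\}$ both pure and vertex-decomposable. *)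

theory Defs
  imports Main
begin

definition simplicial_complex :: "'a set set \<Rightarrow> bool" where
  "simplicial_complex \<Delta> \<longleftrightarrow> finite \<Delta> \<and> {} \<in> \<Delta> \<and> (\<forall>\<sigma>\<in>\<Delta>. finite \<sigma>)
     \<and> (\<forall>\<sigma>\<in>\<Delta>. \<forall>\<tau>. \<tau> \<subseteq> \<sigma> \<longrightarrow> \<tau> \<in> \<Delta>)"

definition vertices :: "'a set set \<Rightarrow> 'a set" where
  "vertices \<Delta> = \<Union>\<Delta>"

definition minimal_nonface :: "'a set set \<Rightarrow> 'a set \<Rightarrow> bool" where
  "minimal_nonface \<Delta> \<sigma> \<longleftrightarrow> \<sigma> \<subseteq> vertices \<Delta> \<and> \<sigma> \<notin> \<Delta> \<and> (\<forall>\<tau>. \<tau> \<subset> \<sigma> \<longrightarrow> \<tau> \<in> \<Delta>)"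

definition flag_complex :: "'a set set \<Rightarrow> bool" where
  "flag_complex \<Delta> \<longleftrightarrow> simplicial_complex \<Delta> \<and>
     (\<forall>\<sigma>. minimal_nonface \<Delta> \<sigma> \<longrightarrow> card \<sigma> = 2)"

definition facets :: "'a set set \<Rightarrow> 'a set set" where
  "facets \<Delta> = {\<sigma>\<in>\<Delta>. \<forall>\<tau>\<in>\<Delta>. \<sigma> \<subseteq> \<tau> \<longrightarrow> \<tau> = \<sigma>}"

definition pure :: "'a set set \<Rightarrow> bool" where
  "pure \<Delta> \<longleftrightarrow> (\<forall>\<sigma>\<in>facets \<Delta>. \<forall>\<tau>\<in>facets \<Delta>. card \<sigma> = card \<tau>)"

definition link :: "'a set set \<Rightarrow> 'a \<Rightarrow> 'a set set" where
  "link \<Delta> v = {\<tau>\<in>\<Delta>. v \<notin> \<tau> \<and> insert v \<tau> \<in> \<Delta>}"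

definition del :: "'a set set \<Rightarrow> 'a \<Rightarrow> 'a set set" where
  "del \<Delta> v = {\<tau>\<in>\<Delta>. v \<notin> \<tau>}"

inductive vertex_decomposable :: "'a set set \<Rightarrow> bool" where
  simplex: "finite S \<Longrightarrow> vertex_decomposable (Pow S)"
| step: "pure \<Delta> \<Longrightarrow> v \<in> vertices \<Delta> \<Longrightarrow> pure (link \<Delta> v) \<Longrightarrow> pure (del \<Delta> v)
    \<Longrightarrow> vertex_decomposable (link \<Delta> v) \<Longrightarrow> vertex_decomposable (del \<Delta> v)
    \<Longrightarrow> vertex_decomposable \<Delta>"

text \<open>d = dimension + 1 = largest face cardinality.\<close>
definition cdim :: "'a set set \<Rightarrow> nat" where
  "cdim \<Delta> = Max (card ` \<Delta>)"

definition fnum :: "'a set set \<Rightarrow> nat \<Rightarrow> nat" where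
  "fnum \<Delta> k = card {\<sigma>\<in>\<Delta>. card \<sigma> = k}"

text \<open>Face vector (f_{-1}, ..., f_{d-1}) as a list; entry k is f_{k-1}.\<close>
definition f_vector :: "'a set set \<Rightarrow> nat list" where
  "f_vector \<Delta> = map (fnum \<Delta>) [0..<cdim \<Delta> + 1]"

definition h_vector :: "'a set set \<Rightarrow> int list" where
  "h_vector \<Delta> = (let d = cdim \<Delta> in
     map (\<lambda>j. \<Sum>i=0..j. (-1) ^ (j - i) * int ((d - i) choose (j - i)) * int (fnum \<Delta> i))
       [0..<d + 1])"

definition strip_trailing_zeros :: "int list \<Rightarrow> int list" where
  "strip_trailing_zeros xs = rev (dropWhile (\<lambda>x. x = 0) (rev xs))"

end

theory Submission
  imports Defs
begin



lemma alt_binom: "(\<Sum>k=0..r. (-1::int)^(r-k) * int (r choose k)) = (if r = 0 then 1 else 0)"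
proof -
  have "(1 + (-1::int))^r = (\<Sum>k\<le>r. of_nat (r choose k) * 1^k * (-1)^(r-k))"
    by (rule binomial_ring)
  hence "(\<Sum>k\<le>r. (-1::int)^(r-k) * int (r choose k)) = 0^r"
    by (simp add: mult.commute)
  thus ?thesis by (simp add: atMost_atLeast0)
qed

lemma key_identity:
  assumes "a \<le> n" "j \<le> n"
  shows "(\<Sum>i=0..j. (-1::int)^(j-i) * int ((n-i) choose (j-i)) *
            (if a \<le> i then int ((n-a) choose (i-a)) else 0)) = (if a = j then 1 else 0)"
proof (cases "a \<le> j")
  case False
  thus ?thesis by (subst sum.neutral) auto
next
  case True
  define r where "r = j - a"
  have "(\<Sum>i=0..j. (-1::int)^(j-i) * int ((n-i) choose (j-i)) *
            (if a \<le> i then int ((n-a) choose (i-a)) else 0))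
      = (\<Sum>i=a..j. (-1::int)^(j-i) * int ((n-i) choose (j-i)) * int ((n-a) choose (i-a)))"
    by (rule sum.mono_neutral_cong_right) auto
  also have "\<dots> = (\<Sum>i=a..j. int ((n-a) choose r) * ((-1::int)^(j-i) * int (r choose (i-a))))"
  proof (rule sum.cong[OF refl])
    fix i assume i: "i \<in> {a..j}"
    have "((n-a) choose (j-a)) * ((j-a) choose (i-a)) = ((n-a) choose (i-a)) * ((n-a-(i-a)) choose (j-a-(i-a)))"
      using i assms by (intro choose_mult) auto
    moreover have "n-a-(i-a) = n-i" "j-a-(i-a) = j-i" using i by auto
    ultimately have "((n-i) choose (j-i)) * ((n-a) choose (i-a)) = ((n-a) choose r) * (r choose (i-a))"
      unfolding r_def by (simp add: mult.commute)
    hence "int ((n-i) choose (j-i)) * int ((n-a) choose (i-a)) = int ((n-a) choose r) * int (r choose (i-a))"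
      by (metis of_nat_mult)
    thus "(-1::int)^(j-i) * int ((n-i) choose (j-i)) * int ((n-a) choose (i-a)) =
          int ((n-a) choose r) * ((-1::int)^(j-i) * int (r choose (i-a)))"
      by (simp add: algebra_simps)
  qed
  also have "\<dots> = int ((n-a) choose r) * (\<Sum>i=a..j. (-1::int)^(j-i) * int (r choose (i-a)))"
    by (simp add: sum_distrib_left)
  also have "(\<Sum>i=a..j. (-1::int)^(j-i) * int (r choose (i-a))) = (\<Sum>k=0..r. (-1::int)^(r-k) * int (r choose k))"
  proof -
    have "{a..j} = {0+a..r+a}" using True r_def by auto
    hence "(\<Sum>i=a..j. (-1::int)^(j-i) * int (r choose (i-a))) = (\<Sum>k=0..r. (-1::int)^(j-(k+a)) * int (r choose (k+a-a)))"
      by (simp only: sum.shift_bounds_cl_nat_ivl)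
    also have "\<dots> = (\<Sum>k=0..r. (-1::int)^(r-k) * int (r choose k))"
      using True r_def by (intro sum.cong) (auto simp: add.commute)
    finally show ?thesis .
  qed
  also have "\<dots> = (if r = 0 then 1 else 0)" by (rule alt_binom)
  finally show ?thesis using True r_def by auto
qed



locale wh =
  fixes D :: "'a set set" and V :: "'a set" and ev od :: "'a \<Rightarrow> 'b"
  assumes flag: "flag_complex D" and V_def: "V = vertices D"
  and inj_ev: "inj_on ev V" and inj_od: "inj_on od V"
  and disj: "\<And>x y. x \<in> V \<Longrightarrow> y \<in> V \<Longrightarrow> ev x \<noteq> od y"
begin

lemma sc: "simplicial_complex D" using flag flag_complex_def by blast
lemma finD: "finite D" using sc unfolding simplicial_complex_def by blast
lemma emptyD: "{} \<in> D" using sc unfolding simplicial_complex_def by blast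
lemma fin_face: "A \<in> D \<Longrightarrow> finite A" using sc unfolding simplicial_complex_def by blast
lemma closed: "A \<in> D \<Longrightarrow> B \<subseteq> A \<Longrightarrow> B \<in> D" using sc unfolding simplicial_complex_def by blast
lemma faceV: "A \<in> D \<Longrightarrow> A \<subseteq> V" unfolding V_def vertices_def by blast
lemma finV: "finite V" unfolding V_def vertices_def using finD fin_face by (intro finite_Union) auto
lemma single: "x \<in> V \<Longrightarrow> {x} \<in> D"
proof -
  assume "x \<in> V"
  then obtain A where "A \<in> D" "x \<in> A" unfolding V_def vertices_def by blast
  thus ?thesis using closed[of A "{x}"] by blast
qed

lemma nonface_min: "finite T \<Longrightarrow> T \<subseteq> V \<Longrightarrow> T \<notin> D \<Longrightarrow> \<exists>\<sigma>\<subseteq>T. minimal_nonface D \<sigma>"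
proof (induction "card T" arbitrary: T rule: less_induct)
  case less
  show ?case
  proof (cases "\<forall>\<tau>. \<tau> \<subset> T \<longrightarrow> \<tau> \<in> D")
    case True
    hence "minimal_nonface D T" using less.prems unfolding minimal_nonface_def V_def by blast
    thus ?thesis by blast
  next
    case False
    then obtain \<tau> where t: "\<tau> \<subset> T" "\<tau> \<notin> D" by blast
    have "card \<tau> < card T" using t less.prems(1) by (simp add: psubset_card_mono)
    from less.hyps[OF this] t less.prems obtain \<sigma> where "\<sigma>\<subseteq>\<tau>" "minimal_nonface D \<sigma>"
      using finite_subset[of \<tau> T] by blast
    thus ?thesis using t by blast
  qed
qed

lemma clique: "T \<subseteq> V \<Longrightarrow> (\<And>x y. x\<in>T \<Longrightarrow> y\<in>T \<Longrightarrow> x\<noteq>y \<Longrightarrow> {x,y} \<in> D) \<Longrightarrow> T \<in> D"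
proof (rule ccontr)
  assume T: "T \<subseteq> V" and pairs: "\<And>x y. x\<in>T \<Longrightarrow> y\<in>T \<Longrightarrow> x\<noteq>y \<Longrightarrow> {x,y} \<in> D" and n: "T \<notin> D"
  have "finite T" using T finV finite_subset by blast
  then obtain \<sigma> where s: "\<sigma> \<subseteq> T" "minimal_nonface D \<sigma>" using nonface_min T n by blast
  hence "card \<sigma> = 2" using flag flag_complex_def by blast
  then obtain x y where xy: "\<sigma> = {x,y}" "x \<noteq> y" by (meson card_2_iff)
  have "\<sigma> \<notin> D" using s minimal_nonface_def by blast
  thus False using pairs[of x y] xy s by blast
qed

lemma rep_inj:
  assumes "A \<subseteq> V" "B \<subseteq> V" "A' \<subseteq> V" "B' \<subseteq> V" "ev`A \<union> od`B = ev`A' \<union> od`B'"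
  shows "A = A' \<and> B = B'"
proof -
  have e: "ev`A = (ev`A \<union> od`B) \<inter> ev`V" if "A \<subseteq> V" "B \<subseteq> V" for A B
  proof -
    have "od`B \<inter> ev`V = {}" using that disj by fastforce
    thus ?thesis using that by blast
  qed
  have o: "od`B = (ev`A \<union> od`B) \<inter> od`V" if "A \<subseteq> V" "B \<subseteq> V" for A B
  proof -
    have "ev`A \<inter> od`V = {}" using that disj by fastforce
    thus ?thesis using that by blast
  qed
  have "ev`A = ev`A'" using e[of A B] e[of A' B'] assms by simp
  hence "A = A'" using inj_on_image_eq_iff[OF inj_ev] assms by blast
  moreover have "od`B = od`B'" using o[of A B] o[of A' B'] assms by simp
  hence "B = B'" using inj_on_image_eq_iff[OF inj_od] assms by blast
  ultimately show ?thesis by blast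
qed

lemma card_rep: "A \<subseteq> V \<Longrightarrow> B \<subseteq> V \<Longrightarrow> card (ev`A \<union> od`B) = card A + card B"
proof -
  assume a: "A \<subseteq> V" "B \<subseteq> V"
  have fa: "finite A" "finite B" using a finV finite_subset by auto
  have "ev`A \<inter> od`B = {}" using a disj by fastforce
  hence "card (ev`A \<union> od`B) = card (ev`A) + card (od`B)"
    using fa by (simp add: card_Un_disjoint)
  also have "\<dots> = card A + card B"
    using a inj_on_subset[OF inj_ev] inj_on_subset[OF inj_od] by (simp add: card_image)
  finally show ?thesis .
qed

lemma decomp: "\<sigma> \<subseteq> ev`V \<union> od`V \<Longrightarrow> \<sigma> = ev`{x\<in>V. ev x\<in>\<sigma>} \<union> od`{x\<in>V. od x\<in>\<sigma>}"
  by auto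

definition C :: "'a set \<Rightarrow> 'a set \<Rightarrow> 'b set set" where
  "C W S = {ev`A \<union> od`B | A B. A \<in> D \<and> A \<subseteq> W \<and> B \<subseteq> W \<union> S \<and> A \<inter> B = {}}"

lemma C_rep: "W \<union> S \<subseteq> V \<Longrightarrow> \<tau> \<in> C W S \<Longrightarrow> \<exists>A B. A\<subseteq>V \<and> B\<subseteq>V \<and> \<tau> = ev`A \<union> od`B"
proof -
  assume a: "W \<union> S \<subseteq> V" "\<tau> \<in> C W S"
  then obtain A B where b: "\<tau> = ev`A \<union> od`B" "A \<in> D" "B \<subseteq> W \<union> S"
    unfolding C_def by blast
  have "A \<subseteq> V" "B \<subseteq> V" using b a(1) faceV by auto
  thus ?thesis using b(1) by blast
qed

lemma mem_C: "W \<union> S \<subseteq> V \<Longrightarrow> A\<subseteq>V \<Longrightarrow> B\<subseteq>V \<Longrightarrow>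
   (ev`A \<union> od`B \<in> C W S \<longleftrightarrow> A\<in>D \<and> A \<subseteq> W \<and> B \<subseteq> W\<union>S \<and> A\<inter>B={})"
proof
  assume a: "W \<union> S \<subseteq> V" "A\<subseteq>V" "B\<subseteq>V" "ev`A \<union> od`B \<in> C W S"
  then obtain A' B' where b: "A' \<in> D" "A' \<subseteq> W" "B' \<subseteq> W \<union> S" "A' \<inter> B' = {}" "ev`A \<union> od`B = ev`A' \<union> od`B'"
    unfolding C_def by blast
  have "A = A' \<and> B = B'" using rep_inj[OF a(2,3) _ _ b(5)] b a(1) faceV by blast
  thus "A\<in>D \<and> A \<subseteq> W \<and> B \<subseteq> W\<union>S \<and> A\<inter>B={}" using b by blast
next
  assume "A\<in>D \<and> A \<subseteq> W \<and> B \<subseteq> W\<union>S \<and> A\<inter>B={}"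
  thus "ev`A \<union> od`B \<in> C W S" unfolding C_def by blast
qed

lemma pure_C:
  assumes WS: "W \<union> S \<subseteq> V"
  shows "pure (C W S)"
proof -
  have "\<And>\<sigma>. \<sigma> \<in> facets (C W S) \<Longrightarrow> card \<sigma> = card (W \<union> S)"
  proof -
    fix \<sigma> assume f: "\<sigma> \<in> facets (C W S)"
    hence s: "\<sigma> \<in> C W S" and mx: "\<And>\<tau>. \<tau> \<in> C W S \<Longrightarrow> \<sigma> \<subseteq> \<tau> \<Longrightarrow> \<tau> = \<sigma>"
      unfolding facets_def by auto
    obtain A B where AB: "A\<subseteq>V" "B\<subseteq>V" "\<sigma> = ev`A \<union> od`B" using C_rep[OF WS s] by blast
    have m: "A\<in>D" "A \<subseteq> W" "B \<subseteq> W\<union>S" "A\<inter>B={}" using mem_C[OF WS AB(1,2)] s AB(3) by auto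
    have "A \<union> B = W \<union> S"
    proof (rule ccontr)
      assume "A \<union> B \<noteq> W \<union> S"
      then obtain y where y: "y \<in> W \<union> S" "y \<notin> A" "y \<notin> B" using m by blast
      have yV: "y \<in> V" using y WS by blast
      have "ev`A \<union> od`(insert y B) \<in> C W S"
      proof -
        have "insert y B \<subseteq> V" using yV AB by blast
        from mem_C[OF WS AB(1) this] show ?thesis using m y by simp
      qed
      moreover have "\<sigma> \<subseteq> ev`A \<union> od`(insert y B)" using AB by blast
      ultimately have eq: "ev`A \<union> od`(insert y B) = \<sigma>" by (rule mx)
      have "od y \<in> ev`A \<union> od`(insert y B)" by simp
      hence "od y \<in> ev`A \<union> od`B" using eq AB(3) by (metis insert_absorb2 insert_iff)
      moreover have "od y \<notin> ev`A" using disj AB(1) yV by fastforce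
      moreover have "od y \<notin> od`B" using inj_on_image_mem_iff[OF inj_od yV AB(2)] y by simp
      ultimately show False by simp
    qed
    have "card \<sigma> = card A + card B" using card_rep AB by simp
    also have "\<dots> = card (A \<union> B)"
      using m(4) AB finV finite_subset by (metis card_Un_disjoint)
    finally show "card \<sigma> = card (W \<union> S)" using \<open>A \<union> B = W \<union> S\<close> by simp
  qed
  thus ?thesis unfolding pure_def by simp
qed

end


context wh begin

lemma C_empty: assumes "S \<subseteq> V" shows "C {} S = Pow (od ` S)"
proof
  show "C {} S \<subseteq> Pow (od ` S)"
  proof
    fix \<tau> assume "\<tau> \<in> C {} S"
    then obtain A B where b: "\<tau> = ev`A \<union> od`B" "A \<subseteq> {}" "B \<subseteq> {} \<union> S"
      unfolding C_def by blast
    thus "\<tau> \<in> Pow (od ` S)" by auto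
  qed
next
  show "Pow (od ` S) \<subseteq> C {} S"
  proof
    fix \<tau> assume t: "\<tau> \<in> Pow (od ` S)"
    define B where "B = {x\<in>S. od x \<in> \<tau>}"
    have "\<tau> = ev`{} \<union> od`B" using t unfolding B_def by auto
    moreover have "ev`{} \<union> od`B \<in> C {} S"
    proof -
      have "B \<subseteq> V" "{} \<union> S \<subseteq> V" using assms unfolding B_def by auto
      from mem_C[OF this(2) _ this(1), of "{}"] show ?thesis using emptyD by (auto simp: B_def)
    qed
    ultimately show "\<tau> \<in> C {} S" by simp
  qed
qed

lemma link_C:
  assumes WS: "W \<union> S \<subseteq> V" and WSd: "W \<inter> S = {}" and x: "x \<in> W"
  shows "link (C W S) (ev x) = C {y\<in>W. y\<noteq>x \<and> {x,y}\<in>D} (S \<union> {y\<in>W. y\<noteq>x \<and> {x,y}\<notin>D})"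
    (is "_ = C ?W ?S")
proof -
  have WS': "?W \<union> ?S \<subseteq> V" using WS by blast
  have xV: "x \<in> V" using x WS by blast
  show ?thesis
  proof (intro set_eqI iffI)
    fix \<tau> assume t: "\<tau> \<in> link (C W S) (ev x)"
    hence t1: "\<tau> \<in> C W S" "ev x \<notin> \<tau>" "insert (ev x) \<tau> \<in> C W S" unfolding link_def by auto
    obtain A B where AB: "A\<subseteq>V" "B\<subseteq>V" "\<tau> = ev`A \<union> od`B" using C_rep[OF WS t1(1)] by blast
    have xA: "x \<notin> A" using t1(2) AB(3) by blast
    have "insert (ev x) \<tau> = ev`(insert x A) \<union> od`B" using AB(3) by simp
    hence ins: "ev`(insert x A) \<union> od`B \<in> C W S" using t1(3) by simp
    have iV: "insert x A \<subseteq> V" using AB xV by blast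
    have m: "insert x A \<in> D" "insert x A \<subseteq> W" "B \<subseteq> W \<union> S" "insert x A \<inter> B = {}"
      using mem_C[OF WS iV AB(2)] ins by simp_all
    have "A \<subseteq> ?W"
    proof
      fix y assume y: "y \<in> A"
      have "{x,y} \<subseteq> insert x A" using y by blast
      hence "{x,y} \<in> D" by (rule closed[OF m(1)])
      thus "y \<in> ?W" using y m(2) xA by auto
    qed
    moreover have "B \<subseteq> ?W \<union> ?S"
    proof
      fix y assume "y \<in> B"
      hence "y \<in> W \<union> S" "y \<noteq> x" using m(3,4) by auto
      thus "y \<in> ?W \<union> ?S" by (cases "{x,y} \<in> D") auto
    qed
    moreover have "A \<in> D" using closed[OF m(1)] by blast
    moreover have "A \<inter> B = {}" using m(4) by blast
    ultimately show "\<tau> \<in> C ?W ?S" using mem_C[OF WS' AB(1,2)] AB(3) by simp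
  next
    fix \<tau> assume t: "\<tau> \<in> C ?W ?S"
    obtain A B where AB: "A\<subseteq>V" "B\<subseteq>V" "\<tau> = ev`A \<union> od`B" using C_rep[OF WS' t] by blast
    have tt: "ev`A \<union> od`B \<in> C ?W ?S" using t AB(3) by simp
    have m: "A \<in> D" "A \<subseteq> ?W" "B \<subseteq> ?W \<union> ?S" "A \<inter> B = {}"
      using mem_C[OF WS' AB(1,2)] tt by simp_all
    have AW: "A \<subseteq> W" "B \<subseteq> W \<union> S" using m(2,3) by auto
    have c1: "\<tau> \<in> C W S" using mem_C[OF WS AB(1,2)] AB(3) m(1,4) AW by simp
    have xA: "x \<notin> A" "x \<notin> B" using m WSd x by auto
    have "ev x \<notin> ev`A" using inj_on_image_mem_iff[OF inj_ev xV AB(1)] xA by simp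
    moreover have "ev x \<notin> od`B" using disj xV AB(2) by fastforce
    ultimately have c2: "ev x \<notin> \<tau>" using AB(3) by simp
    have iV: "insert x A \<subseteq> V" using AB xV by blast
    have iD: "insert x A \<in> D"
    proof (rule clique[OF iV])
      fix u v assume uv: "u \<in> insert x A" "v \<in> insert x A" "u \<noteq> v"
      show "{u,v} \<in> D"
      proof (cases "u = x")
        case True
        hence "v \<in> ?W" using uv m(2) by auto
        thus ?thesis using True by simp
      next
        case False
        note uA = this
        show ?thesis
        proof (cases "v = x")
          case True
          hence "u \<in> ?W" using uv uA m(2) by auto
          thus ?thesis using True by (simp add: insert_commute)
        next
          case False
          hence "{u,v} \<subseteq> A" using uv uA by auto
          thus ?thesis using closed[OF m(1)] by blast
        qed
      qed
    qed
    have "insert (ev x) \<tau> = ev`(insert x A) \<union> od`B" using AB(3) by simp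
    moreover have "ev`(insert x A) \<union> od`B \<in> C W S"
    proof -
      have "insert x A \<subseteq> W" "insert x A \<inter> B = {}" using AW(1) x xA m(4) by auto
      thus ?thesis using mem_C[OF WS iV AB(2)] iD AW(2) by simp
    qed
    ultimately have c3: "insert (ev x) \<tau> \<in> C W S" by simp
    show "\<tau> \<in> link (C W S) (ev x)" unfolding link_def using c1 c2 c3 by blast
  qed
qed

lemma del_C:
  assumes WS: "W \<union> S \<subseteq> V" and WSd: "W \<inter> S = {}" and x: "x \<in> W"
  shows "del (C W S) (ev x) = C (W - {x}) (insert x S)"
proof -
  have WS': "(W - {x}) \<union> insert x S \<subseteq> V" using WS x by blast
  have xV: "x \<in> V" using x WS by blast
  show ?thesis
  proof (intro set_eqI iffI)
    fix \<tau> assume t: "\<tau> \<in> del (C W S) (ev x)"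
    hence t1: "\<tau> \<in> C W S" "ev x \<notin> \<tau>" unfolding del_def by auto
    obtain A B where AB: "A\<subseteq>V" "B\<subseteq>V" "\<tau> = ev`A \<union> od`B" using C_rep[OF WS t1(1)] by blast
    have xA: "x \<notin> A" using t1(2) AB(3) by blast
    have tt: "ev`A \<union> od`B \<in> C W S" using t1(1) AB(3) by simp
    have m: "A \<in> D" "A \<subseteq> W" "B \<subseteq> W \<union> S" "A \<inter> B = {}"
      using mem_C[OF WS AB(1,2)] tt by simp_all
    have "A \<subseteq> W - {x}" "B \<subseteq> (W - {x}) \<union> insert x S" using m(2,3) xA by auto
    thus "\<tau> \<in> C (W - {x}) (insert x S)" using mem_C[OF WS' AB(1,2)] AB(3) m(1,4) by simp
  next
    fix \<tau> assume t: "\<tau> \<in> C (W - {x}) (insert x S)"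
    obtain A B where AB: "A\<subseteq>V" "B\<subseteq>V" "\<tau> = ev`A \<union> od`B" using C_rep[OF WS' t] by blast
    have tt: "ev`A \<union> od`B \<in> C (W - {x}) (insert x S)" using t AB(3) by simp
    have m: "A \<in> D" "A \<subseteq> W - {x}" "B \<subseteq> (W - {x}) \<union> insert x S" "A \<inter> B = {}"
      using mem_C[OF WS' AB(1,2)] tt by simp_all
    have AW: "A \<subseteq> W" "B \<subseteq> W \<union> S" using m(2,3) x by auto
    have c1: "\<tau> \<in> C W S" using mem_C[OF WS AB(1,2)] AB(3) m(1,4) AW by simp
    have "ev x \<notin> ev`A" using inj_on_image_mem_iff[OF inj_ev xV AB(1)] m(2) by auto
    moreover have "ev x \<notin> od`B" using disj xV AB(2) by fastforce
    ultimately have c2: "ev x \<notin> \<tau>" using AB(3) by simp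
    show "\<tau> \<in> del (C W S) (ev x)" unfolding del_def using c1 c2 by blast
  qed
qed

lemma vd_C: "W \<union> S \<subseteq> V \<Longrightarrow> W \<inter> S = {} \<Longrightarrow> vertex_decomposable (C W S)"
proof (induction "card W" arbitrary: W S rule: less_induct)
  case less
  have finW: "finite W" using less.prems finV finite_subset by blast
  show ?case
  proof (cases "W = {}")
    case True
    have "finite (od ` S)" using less.prems finV finite_subset by blast
    thus ?thesis using C_empty less.prems(1) True vertex_decomposable.simplex by fastforce
  next
    case False
    then obtain x where x: "x \<in> W" by blast
    have xV: "x \<in> V" using x less.prems by blast
    let ?W = "{y\<in>W. y\<noteq>x \<and> {x,y}\<in>D}" and ?S = "S \<union> {y\<in>W. y\<noteq>x \<and> {x,y}\<notin>D}"
    have c1: "card ?W < card W" using x finW by (intro psubset_card_mono) auto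
    have c2: "card (W - {x}) < card W" by (rule card_Diff1_less[OF finW x])
    have s1: "?W \<union> ?S \<subseteq> V" "(W - {x}) \<union> insert x S \<subseteq> V" using less.prems x by auto
    have d1: "?W \<inter> ?S = {}" "(W - {x}) \<inter> insert x S = {}" using less.prems(2) by auto
    have vert: "ev x \<in> vertices (C W S)"
    proof -
      have "{x} \<subseteq> V" "{} \<subseteq> V" using xV by auto
      from mem_C[OF less.prems(1) this] have "ev`{x} \<union> od`{} \<in> C W S" using single[OF xV] x by simp
      thus ?thesis unfolding vertices_def by auto
    qed
    show ?thesis
      apply (rule vertex_decomposable.step[OF pure_C[OF less.prems(1)] vert])
      using link_C[OF less.prems x] del_C[OF less.prems x] pure_C[OF s1(1)] pure_C[OF s1(2)]
        less.hyps[OF c1 s1(1) d1(1)] less.hyps[OF c2 s1(2) d1(2)] by simp_all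
  qed
qed

end


context wh begin

abbreviation "G \<equiv> C V {}"

lemma V0: "V \<union> {} \<subseteq> V" by simp

lemma G_rep: "\<tau> \<in> G \<Longrightarrow> \<exists>A B. A\<subseteq>V \<and> B\<subseteq>V \<and> \<tau> = ev`A \<union> od`B"
  using C_rep[OF V0] by blast

lemma mem_G: "A\<subseteq>V \<Longrightarrow> B\<subseteq>V \<Longrightarrow> (ev`A \<union> od`B \<in> G \<longleftrightarrow> A\<in>D \<and> A\<inter>B={})"
  using mem_C[OF V0] faceV by auto

lemma sc_G: "simplicial_complex G"
  unfolding simplicial_complex_def
proof (intro conjI ballI allI impI)
  have "G \<subseteq> (\<lambda>(A,B). ev`A \<union> od`B) ` (D \<times> Pow V)"
  proof
    fix \<tau> assume "\<tau> \<in> G"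
    then obtain A B where ab: "\<tau> = ev`A \<union> od`B" "A \<in> D" "B \<subseteq> V" unfolding C_def by blast
    have pm: "(A,B) \<in> D \<times> Pow V" using ab by simp
    have "\<tau> = (\<lambda>(A,B). ev`A \<union> od`B) (A,B)" using ab by simp
    thus "\<tau> \<in> (\<lambda>(A,B). ev`A \<union> od`B) ` (D \<times> Pow V)" by (rule rev_image_eqI[OF pm])
  qed
  moreover have "finite (D \<times> Pow V)" using finD finV by simp
  ultimately show "finite G" by (meson finite_imageI finite_subset)
next
  show "{} \<in> G" using mem_G[of "{}" "{}"] emptyD by simp
next
  fix \<sigma> assume "\<sigma> \<in> G"
  then obtain A B where AB: "A\<subseteq>V" "B\<subseteq>V" "\<sigma> = ev`A \<union> od`B" by (auto dest!: G_rep)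
  thus "finite \<sigma>" using finite_subset[OF AB(1) finV] finite_subset[OF AB(2) finV] by simp
next
  fix \<sigma> \<tau> assume s: "\<sigma> \<in> G" and t: "\<tau> \<subseteq> \<sigma>"
  then obtain A B where AB: "A\<subseteq>V" "B\<subseteq>V" "\<sigma> = ev`A \<union> od`B" by (auto dest!: G_rep)
  have tt: "ev`A \<union> od`B \<in> G" using s by (simp only: AB(3))
  have m: "A \<in> D" "A \<inter> B = {}" using iffD1[OF mem_G[OF AB(1,2)] tt] by auto
  define A' where "A' = {x\<in>A. ev x \<in> \<tau>}"
  define B' where "B' = {x\<in>B. od x \<in> \<tau>}"
  have eq: "\<tau> = ev`A' \<union> od`B'"
  proof (rule set_eqI)
    fix z show "z \<in> \<tau> \<longleftrightarrow> z \<in> ev`A' \<union> od`B'" using t AB(3) unfolding A'_def B'_def by auto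
  qed
  have sub: "A' \<subseteq> V" "B' \<subseteq> V" "A' \<subseteq> A" using AB unfolding A'_def B'_def by auto
  have "A' \<in> D" using closed[OF m(1) sub(3)] .
  moreover have "A' \<inter> B' = {}" using m(2) unfolding A'_def B'_def by auto
  ultimately have "ev`A' \<union> od`B' \<in> G" using iffD2[OF mem_G[OF sub(1,2)]] by blast
  thus "\<tau> \<in> G" using eq by simp
qed

lemma vert_G: "vertices G \<subseteq> ev`V \<union> od`V"
proof
  fix v assume "v \<in> vertices G"
  then obtain \<tau> where "\<tau> \<in> G" "v \<in> \<tau>" unfolding vertices_def by blast
  then obtain A B where AB: "A\<subseteq>V" "B\<subseteq>V" "\<tau> = ev`A \<union> od`B" by (auto dest!: G_rep)
  thus "v \<in> ev`V \<union> od`V" using \<open>v \<in> \<tau>\<close> by blast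
qed

lemma flag_G: "flag_complex G"
  unfolding flag_complex_def
proof (intro conjI allI impI)
  show "simplicial_complex G" by (rule sc_G)
next
  fix \<sigma> assume mn: "minimal_nonface G \<sigma>"
  have sv0: "\<sigma> \<subseteq> vertices G" and nf: "\<sigma> \<notin> G" and pr: "\<And>\<tau>. \<tau> \<subset> \<sigma> \<Longrightarrow> \<tau> \<in> G"
    using mn unfolding minimal_nonface_def by auto
  have sv: "\<sigma> \<subseteq> ev`V \<union> od`V" using sv0 vert_G by (rule order.trans)
  have key: "\<And>e. e \<subseteq> \<sigma> \<Longrightarrow> e \<notin> G \<Longrightarrow> \<sigma> = e"
  proof (rule ccontr)
    fix e assume "e \<subseteq> \<sigma>" "e \<notin> G" "\<sigma> \<noteq> e"
    hence "e \<subset> \<sigma>" by auto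
    thus False using pr \<open>e \<notin> G\<close> by blast
  qed
  define A where "A = {x\<in>V. ev x \<in> \<sigma>}"
  define B where "B = {x\<in>V. od x \<in> \<sigma>}"
  have AB: "A \<subseteq> V" "B \<subseteq> V" unfolding A_def B_def by auto
  have eq: "\<sigma> = ev`A \<union> od`B"
  proof (rule set_eqI)
    fix z show "z \<in> \<sigma> \<longleftrightarrow> z \<in> ev`A \<union> od`B" using sv unfolding A_def B_def by auto
  qed
  have notAB: "\<not> (A \<in> D \<and> A \<inter> B = {})"
  proof
    assume "A \<in> D \<and> A \<inter> B = {}"
    hence "ev`A \<union> od`B \<in> G" using iffD2[OF mem_G[OF AB]] by blast
    hence "\<sigma> \<in> G" by (simp only: eq)
    thus False using nf by blast
  qed
  show "card \<sigma> = 2"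
  proof (cases "A \<inter> B = {}")
    case False
    then obtain x where x: "x \<in> A" "x \<in> B" by blast
    have xV: "x \<in> V" using x AB by blast
    have xx: "{x} \<subseteq> V" using xV by blast
    have e1: "{ev x, od x} = ev`{x} \<union> od`{x}" by (simp add: insert_commute)
    have "{ev x, od x} \<notin> G"
    proof
      assume "{ev x, od x} \<in> G"
      hence "ev`{x} \<union> od`{x} \<in> G" by (simp only: e1)
      hence "{x} \<inter> {x} = {}" using iffD1[OF mem_G[OF xx xx]] by blast
      thus False by simp
    qed
    moreover have "{ev x, od x} \<subseteq> \<sigma>" using x unfolding A_def B_def by blast
    ultimately have "\<sigma> = {ev x, od x}" using key by blast
    moreover have "ev x \<noteq> od x" using disj xV by blast
    ultimately show ?thesis by simp
  next
    case True
    hence nA: "A \<notin> D" using notAB by blast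
    have "\<exists>u v. u \<in> A \<and> v \<in> A \<and> u \<noteq> v \<and> {u,v} \<notin> D"
    proof (rule ccontr)
      assume "\<not> ?thesis"
      hence "\<And>u v. u \<in> A \<Longrightarrow> v \<in> A \<Longrightarrow> u \<noteq> v \<Longrightarrow> {u,v} \<in> D" by blast
      hence "A \<in> D" by (rule clique[OF AB(1)])
      thus False using nA by blast
    qed
    then obtain u v where uv: "u \<in> A" "v \<in> A" "u \<noteq> v" "{u,v} \<notin> D" by blast
    have uvV: "{u,v} \<subseteq> V" using uv AB by blast
    have e0: "{} \<subseteq> V" by simp
    have e1: "{ev u, ev v} = ev`{u,v} \<union> od`{}" by simp
    have "{ev u, ev v} \<notin> G"
    proof
      assume "{ev u, ev v} \<in> G"
      hence "ev`{u,v} \<union> od`{} \<in> G" by (simp only: e1)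
      hence "{u,v} \<in> D" using iffD1[OF mem_G[OF uvV e0]] by blast
      thus False using uv(4) by blast
    qed
    moreover have "{ev u, ev v} \<subseteq> \<sigma>" using uv unfolding A_def by blast
    ultimately have "\<sigma> = {ev u, ev v}" using key by blast
    moreover have "ev u \<noteq> ev v" using inj_onD[OF inj_ev] uv uvV by blast
    ultimately show ?thesis by simp
  qed
qed

lemma vd_G: "vertex_decomposable G" using vd_C[of V "{}"] by simp

end


context wh begin

lemma rep_G_obtain:
  assumes t: "\<tau> \<in> G"
  obtains A B where "A\<subseteq>V" "B\<subseteq>V" "\<tau> = ev`A \<union> od`B" "A \<in> D" "A \<inter> B = {}"
proof -
  obtain A B where AB: "A\<subseteq>V" "B\<subseteq>V" "\<tau> = ev`A \<union> od`B" using t by (auto dest!: G_rep)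
  have tt: "ev`A \<union> od`B \<in> G" using t by (simp only: AB(3))
  have m: "A \<in> D \<and> A \<inter> B = {}" using iffD1[OF mem_G[OF AB(1,2)] tt] .
  show ?thesis using that[OF AB(1,2,3)] m by blast
qed

lemma card_G_le: "\<tau> \<in> G \<Longrightarrow> card \<tau> \<le> card V"
proof -
  assume t: "\<tau> \<in> G"
  obtain A B where AB: "A\<subseteq>V" "B\<subseteq>V" "\<tau> = ev`A \<union> od`B" "A \<in> D" "A \<inter> B = {}"
    by (rule rep_G_obtain[OF t])
  have "card \<tau> = card A + card B" using card_rep[OF AB(1,2)] AB(3) by simp
  also have "\<dots> = card (A \<union> B)"
    using card_Un_disjoint[OF finite_subset[OF AB(1) finV] finite_subset[OF AB(2) finV] AB(5)] by simp
  also have "\<dots> \<le> card V" using AB(1,2) finV by (intro card_mono) auto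
  finally show ?thesis .
qed

lemma odV_G: "od`V \<in> G"
proof -
  have "{} \<subseteq> V" "V \<subseteq> V" by auto
  from iffD2[OF mem_G[OF this]] have "ev`{} \<union> od`V \<in> G" using emptyD by blast
  thus ?thesis by simp
qed

lemma cdim_G: "cdim G = card V"
  unfolding cdim_def
proof (rule Max_eqI)
  have "finite G" using conjunct1[OF sc_G[unfolded simplicial_complex_def]] .
  thus "finite (card ` G)" by (rule finite_imageI)
next
  fix y assume "y \<in> card ` G"
  then obtain \<tau> where "\<tau> \<in> G" "y = card \<tau>" by (rule imageE)
  thus "y \<le> card V" using card_G_le by simp
next
  have "card (od`V) = card V" using card_image[OF inj_od] .
  thus "card V \<in> card ` G" using odV_G by (metis image_eqI)
qed

lemma fnum_G: "fnum G i = (\<Sum>A\<in>D. if card A \<le> i then (card V - card A) choose (i - card A) else 0)"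
proof -
  define f where "f = (\<lambda>(A::'a set,B::'a set). ev`A \<union> od`B)"
  define P where "P = (SIGMA A:D. if card A \<le> i then {B. B \<subseteq> V - A \<and> card B = i - card A} else {})"
  have fAB: "\<And>A B. f (A,B) = ev`A \<union> od`B" unfolding f_def by simp
  have eqs: "{\<tau>\<in>G. card \<tau> = i} = f ` P"
  proof (intro set_eqI iffI)
    fix \<tau> assume "\<tau> \<in> {\<tau>\<in>G. card \<tau> = i}"
    hence t: "\<tau> \<in> G" "card \<tau> = i" by auto
    obtain A B where AB: "A\<subseteq>V" "B\<subseteq>V" "\<tau> = ev`A \<union> od`B" "A \<in> D" "A \<inter> B = {}"
      by (rule rep_G_obtain[OF t(1)])
    have c: "card A + card B = i" using card_rep[OF AB(1,2)] AB(3) t(2) by simp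
    have "(A,B) \<in> P" unfolding P_def using AB c by auto
    moreover have "\<tau> = f (A,B)" using AB(3) fAB by simp
    ultimately show "\<tau> \<in> f ` P" by (rule rev_image_eqI)
  next
    fix \<tau> assume "\<tau> \<in> f ` P"
    then obtain A B where ab: "(A,B) \<in> P" "\<tau> = f (A,B)" by auto
    have p: "A \<in> D" "card A \<le> i" "B \<subseteq> V - A" "card B = i - card A"
      using ab(1) unfolding P_def by (auto split: if_splits)
    have AB: "A \<subseteq> V" "B \<subseteq> V" "A \<inter> B = {}" using p faceV by auto
    have "ev`A \<union> od`B \<in> G" using iffD2[OF mem_G[OF AB(1,2)]] p(1) AB(3) by blast
    moreover have "card (ev`A \<union> od`B) = i" using card_rep[OF AB(1,2)] p by simp
    ultimately show "\<tau> \<in> {\<tau>\<in>G. card \<tau> = i}" using ab(2) fAB by simp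
  qed
  have inj: "inj_on f P"
  proof (rule inj_onI)
    fix x y assume xy: "x \<in> P" "y \<in> P" "f x = f y"
    obtain A B where x: "x = (A,B)" by (cases x)
    obtain A' B' where y: "y = (A',B')" by (cases y)
    have "A \<in> D" "B \<subseteq> V" "A' \<in> D" "B' \<subseteq> V" using xy x y unfolding P_def by (auto split: if_splits)
    hence "A \<subseteq> V" "B \<subseteq> V" "A' \<subseteq> V" "B' \<subseteq> V" using faceV by auto
    moreover have "ev`A \<union> od`B = ev`A' \<union> od`B'" using xy(3) x y fAB by simp
    ultimately have "A = A' \<and> B = B'" by (rule rep_inj)
    thus "x = y" using x y by simp
  qed
  have fin: "\<forall>A\<in>D. finite (if card A \<le> i then {B. B \<subseteq> V - A \<and> card B = i - card A} else {})"
  proof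
    fix A assume "A \<in> D"
    have "{B. B \<subseteq> V - A \<and> card B = i - card A} \<subseteq> Pow V" by auto
    hence "finite {B. B \<subseteq> V - A \<and> card B = i - card A}" using finV finite_Pow_iff finite_subset by metis
    thus "finite (if card A \<le> i then {B. B \<subseteq> V - A \<and> card B = i - card A} else {})" by simp
  qed
  have "fnum G i = card (f ` P)" unfolding fnum_def eqs ..
  also have "\<dots> = card P" using card_image[OF inj] .
  also have "\<dots> = (\<Sum>A\<in>D. card (if card A \<le> i then {B. B \<subseteq> V - A \<and> card B = i - card A} else {}))"
    unfolding P_def using card_SigmaI[OF finD fin] .
  also have "\<dots> = (\<Sum>A\<in>D. if card A \<le> i then (card V - card A) choose (i - card A) else 0)"
  proof (rule sum.cong[OF refl])
    fix A assume A: "A \<in> D"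
    have "card (V - A) = card V - card A" using card_Diff_subset[OF fin_face[OF A] faceV[OF A]] .
    moreover have "card {B. B \<subseteq> V - A \<and> card B = i - card A} = card (V - A) choose (i - card A)"
      using n_subsets[of "V - A" "i - card A"] finV by simp
    ultimately show "card (if card A \<le> i then {B. B \<subseteq> V - A \<and> card B = i - card A} else {}) =
       (if card A \<le> i then (card V - card A) choose (i - card A) else 0)" by simp
  qed
  finally show ?thesis .
qed

end


context wh begin

lemma int_fnum_G: "int (fnum G i) = (\<Sum>A\<in>D. if card A \<le> i then int ((card V - card A) choose (i - card A)) else 0)"
  unfolding fnum_G of_nat_sum by (rule sum.cong) simp_all

lemma h_G: "h_vector G = map (\<lambda>j. int (fnum D j)) [0..<card V + 1]"
  unfolding h_vector_def Let_def cdim_G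
proof (rule map_cong[OF refl])
  fix j assume "j \<in> set [0..<card V + 1]"
  hence j: "j \<le> card V" by auto
  define n where "n = card V"
  have "(\<Sum>i=0..j. (-1)^(j-i) * int ((n-i) choose (j-i)) * int (fnum G i))
      = (\<Sum>i=0..j. \<Sum>A\<in>D. (-1)^(j-i) * int ((n-i) choose (j-i)) *
           (if card A \<le> i then int ((n - card A) choose (i - card A)) else 0))"
    unfolding int_fnum_G n_def by (simp add: sum_distrib_left)
  also have "\<dots> = (\<Sum>A\<in>D. \<Sum>i=0..j. (-1)^(j-i) * int ((n-i) choose (j-i)) *
           (if card A \<le> i then int ((n - card A) choose (i - card A)) else 0))"
    by (rule sum.swap)
  also have "\<dots> = (\<Sum>A\<in>D. if card A = j then 1 else 0)"
  proof (rule sum.cong[OF refl])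
    fix A assume A: "A \<in> D"
    have "card A \<le> n" unfolding n_def using card_mono[OF finV faceV[OF A]] .
    thus "(\<Sum>i=0..j. (-1)^(j-i) * int ((n-i) choose (j-i)) *
           (if card A \<le> i then int ((n - card A) choose (i - card A)) else 0)) = (if card A = j then 1 else 0)"
      using key_identity j n_def by blast
  qed
  also have "\<dots> = int (fnum D j)"
    unfolding fnum_def using sum.inter_filter[OF finD, of "\<lambda>_. (1::int)" "\<lambda>A. card A = j", symmetric]
    by simp
  finally show "(\<Sum>i=0..j. (-1)^(j-i) * int ((card V-i) choose (j-i)) * int (fnum G i)) = int (fnum D j)"
    unfolding n_def .
qed

lemma strip_G: "strip_trailing_zeros (h_vector G) = map int (f_vector D)"
proof -
  define c where "c = cdim D"
  define n where "n = card V"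
  have fin: "finite (card ` D)" using finD by simp
  have ne: "card ` D \<noteq> {}" using emptyD by blast
  have cmem: "c \<in> card ` D" unfolding c_def cdim_def using Max_in[OF fin ne] .
  then obtain A0 where A0: "A0 \<in> D" "card A0 = c" by blast
  have cle: "\<And>A. A \<in> D \<Longrightarrow> card A \<le> c" unfolding c_def cdim_def using Max_ge[OF fin] by blast
  have cn: "c \<le> n" using cle[OF A0(1)] A0(2) card_mono[OF finV faceV[OF A0(1)]] n_def by simp
  have pos: "fnum D c \<noteq> 0"
  proof -
    have "A0 \<in> {A\<in>D. card A = c}" using A0 by simp
    moreover have "finite {A\<in>D. card A = c}" using finD by simp
    ultimately show ?thesis unfolding fnum_def by (metis card_0_eq empty_iff)
  qed
  have zero: "\<And>k. c < k \<Longrightarrow> fnum D k = 0"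
  proof -
    fix k assume k: "c < k"
    have e: "{A\<in>D. card A = k} = {}" using cle k by fastforce
    show "fnum D k = 0" unfolding fnum_def e by simp
  qed
  have split: "[0..<n+1] = [0..<c] @ [c] @ [c+1..<n+1]"
  proof -
    have "n + 1 = (c + 1) + (n - c)" using cn by simp
    hence "[0..<n+1] = [0..<c+1] @ [c+1..<(c+1)+(n-c)]" using upt_add_eq_append[of 0 "c+1" "n-c"] by simp
    also have "(c+1)+(n-c) = n+1" using cn by simp
    also have "[0..<c+1] = [0..<c] @ [c]" by simp
    finally show ?thesis by simp
  qed
  define Z where "Z = rev (map (\<lambda>j. int (fnum D j)) [c+1..<n+1])"
  define R where "R = rev (map (\<lambda>j. int (fnum D j)) [0..<c])"
  have "h_vector G = map (\<lambda>j. int (fnum D j)) [0..<c] @ [int (fnum D c)] @ map (\<lambda>j. int (fnum D j)) [c+1..<n+1]"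
    unfolding h_G n_def[symmetric] split by simp
  hence rv: "rev (h_vector G) = Z @ int (fnum D c) # R"
    unfolding Z_def R_def by simp
  have zz: "\<And>x. x \<in> set Z \<Longrightarrow> x = 0" unfolding Z_def using zero by auto
  have "dropWhile (\<lambda>x. x = 0) (rev (h_vector G)) = dropWhile (\<lambda>x. x = 0) (int (fnum D c) # R)"
    unfolding rv by (rule dropWhile_append2) (rule zz)
  also have "\<dots> = int (fnum D c) # R" using pos by simp
  finally have "dropWhile (\<lambda>x. x = 0) (rev (h_vector G)) = int (fnum D c) # R" .
  hence "strip_trailing_zeros (h_vector G) = map (\<lambda>j. int (fnum D j)) [0..<c] @ [int (fnum D c)]"
    unfolding strip_trailing_zeros_def R_def by simp
  also have "\<dots> = map int (f_vector D)" unfolding f_vector_def c_def[symmetric] by simp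
  finally show ?thesis .
qed

end



theorem corollary3p7:
  fixes \<Delta> :: "'a set set"
  assumes "flag_complex \<Delta>"
  shows "\<exists>\<Gamma> :: nat set set. flag_complex \<Gamma> \<and> vertex_decomposable \<Gamma> \<and>
           strip_trailing_zeros (h_vector \<Gamma>) = map int (f_vector \<Delta>)"
proof -
  have sc: "simplicial_complex \<Delta>" using assms unfolding flag_complex_def by (rule conjunct1)
  have finD: "finite \<Delta>" and ff: "\<forall>\<sigma>\<in>\<Delta>. finite \<sigma>"
    using sc unfolding simplicial_complex_def by auto
  define V where "V = vertices \<Delta>"
  have finV: "finite V" unfolding V_def vertices_def using finD ff by (intro finite_Union) auto
  obtain e where e: "bij_betw e V {0..<card V}" using ex_bij_betw_finite_nat[OF finV] by blast
  have ie: "inj_on e V" using e by (rule bij_betw_imp_inj_on)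
  define ev where "ev = (\<lambda>x. 2 * e x)"
  define od where "od = (\<lambda>x. 2 * e x + 1)"
  have i1: "inj_on ev V" unfolding ev_def using ie by (auto simp: inj_on_def)
  have i2: "inj_on od V" unfolding od_def using ie by (auto simp: inj_on_def)
  have d: "\<And>x y. x \<in> V \<Longrightarrow> y \<in> V \<Longrightarrow> ev x \<noteq> od y" unfolding ev_def od_def by presburger
  interpret W: wh \<Delta> V ev od
    by (unfold_locales) (use assms V_def i1 i2 d in auto)
  show ?thesis using W.flag_G W.vd_G W.strip_G by blast
qed



end
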